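(* Let $S=\{0,1,a_0,a_1,a_2\}$ and consider the CA local rule $f$ of radius $1$ for undirected graphs (single vertex label, single edge label, edge relation symmetric) such that a vertex in state $i\in\{0,1\}$ takes state $1-i$, and a vertex in state $a_i$ takes state $0$ if it has a neighbor in a state from $\{0,1\}$ and state $a_{(i+1)\bmod 3}$ otherwise. Then for every nonempty undirected graph $G=(V,E)$ (finite or infinite), $G$ is connected if and only if $F_{G,f}$ has no configuration $c\in S^V$ of minimal period $6$, i.e. no $c$ with $F_{G,f}^6(c)=c$ and $F_{G,f}^j(c)\neq c$ for $1\le j\le 5$.
   Context: An undirected graph $G=(V,E)$ is viewed as a labeled graph with one vertex label and one edge label whose edge relation is symmetric. A CA local rule of radius $1$ determines the next state of a vertex from its current state and the set of states present among its neighbors; its global map $F_{G,f}:S^V\to S^V$ applies this rule simultaneously at every vertex. *)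

theory Defs
  imports Main
begin

datatype st = S0 | S1 | A0 | A1 | A2

fun rule13 :: "st \<Rightarrow> st set \<Rightarrow> st" where
  "rule13 S0 N = S1"
| "rule13 S1 N = S0"
| "rule13 A0 N = (if S0 \<in> N \<or> S1 \<in> N then S0 else A1)"
| "rule13 A1 N = (if S0 \<in> N \<or> S1 \<in> N then S0 else A2)"
| "rule13 A2 N = (if S0 \<in> N \<or> S1 \<in> N then S0 else A0)"

text \<open>Undirected graph: vertex set = the type 'v (any cardinality, nonempty),
  edge relation E (assumed symmetric in the theorem).  Global map F_{G,f}.\<close>
definition global_map ::
  "('v \<Rightarrow> 'v \<Rightarrow> bool) \<Rightarrow> ('s \<Rightarrow> 's set \<Rightarrow> 's) \<Rightarrow> ('v \<Rightarrow> 's) \<Rightarrow> ('v \<Rightarrow> 's)" where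
  "global_map E f c = (\<lambda>v. f (c v) {c u | u. E v u})"

definition graph_connected :: "('v \<Rightarrow> 'v \<Rightarrow> bool) \<Rightarrow> bool" where
  "graph_connected E \<longleftrightarrow> (\<forall>u v. E\<^sup>*\<^sup>* u v)"

definition has_min_period :: "('a \<Rightarrow> 'a) \<Rightarrow> nat \<Rightarrow> 'a \<Rightarrow> bool" where
  "has_min_period F p c \<longleftrightarrow> (F ^^ p) c = c \<and> (\<forall>j. 1 \<le> j \<and> j < p \<longrightarrow> (F ^^ j) c \<noteq> c)"

end

theory Submission
  imports Defs
begin

definition bin :: "st \<Rightarrow> bool" where "bin s \<longleftrightarrow> s = S0 \<or> s = S1"

fun nxt :: "st \<Rightarrow> st" where
  "nxt S0 = S1" | "nxt S1 = S0" | "nxt A0 = A1" | "nxt A1 = A2" | "nxt A2 = A0"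

lemma bin_persist: "bin (x v) \<Longrightarrow> bin (global_map E rule13 x v)"
  by (cases "x v") (auto simp: bin_def global_map_def)

lemma bin_persist_n: "bin (x v) \<Longrightarrow> bin ((global_map E rule13 ^^ n) x v)"
  by (induction n) (auto intro: bin_persist)

lemma bin_spread: "bin (x v) \<Longrightarrow> E u v \<Longrightarrow> bin (global_map E rule13 x u)"
  by (cases "x u") (auto simp: bin_def global_map_def)

lemma nxt_bin: "bin (nxt s) \<longleftrightarrow> bin s"
  by (cases s) (simp_all add: bin_def)

lemma uniform_step:
  assumes "(\<forall>v. bin (x v)) \<or> (\<forall>v. \<not> bin (x v))"
  shows "global_map E rule13 x = nxt \<circ> x"
    and "(\<forall>v. bin ((nxt \<circ> x) v)) \<or> (\<forall>v. \<not> bin ((nxt \<circ> x) v))"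
proof -
  show "global_map E rule13 x = nxt \<circ> x"
  proof
    fix v
    show "global_map E rule13 x v = (nxt \<circ> x) v"
    proof (cases "\<forall>v. bin (x v)")
      case True
      then have "bin (x v)" by blast
      then have "x v = S0 \<or> x v = S1" unfolding bin_def .
      then show ?thesis by (auto simp: global_map_def)
    next
      case False
      then have a: "\<forall>v. \<not> bin (x v)" using assms by blast
      then have nb: "\<not> bin (x v)" by blast
      have n0: "S0 \<notin> {x u | u. E v u}"
      proof
        assume "S0 \<in> {x u | u. E v u}"
        then obtain u where "S0 = x u" by blast
        then have "bin (x u)" unfolding bin_def by simp
        then show False using a by blast
      qed
      have n1: "S1 \<notin> {x u | u. E v u}"
      proof
        assume "S1 \<in> {x u | u. E v u}"
        then obtain u where "S1 = x u" by blast
        then have "bin (x u)" unfolding bin_def by simp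
        then show False using a by blast
      qed
      have "x v = A0 \<or> x v = A1 \<or> x v = A2" using nb unfolding bin_def by (cases "x v") simp_all
      then show ?thesis using n0 n1 unfolding global_map_def by auto
    qed
  qed
  show "(\<forall>v. bin ((nxt \<circ> x) v)) \<or> (\<forall>v. \<not> bin ((nxt \<circ> x) v))"
    using assms by (simp add: nxt_bin)
qed

lemma uniform_iter:
  assumes "(\<forall>v. bin (x v)) \<or> (\<forall>v. \<not> bin (x v))"
  shows "(global_map E rule13 ^^ n) x = (nxt ^^ n) \<circ> x
     \<and> ((\<forall>v. bin (((nxt ^^ n) \<circ> x) v)) \<or> (\<forall>v. \<not> bin (((nxt ^^ n) \<circ> x) v)))"
proof (induction n)
  case 0
  then show ?case using assms by auto
next
  case (Suc n)
  then have h: "(global_map E rule13 ^^ n) x = (nxt ^^ n) \<circ> x"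
    and u: "(\<forall>v. bin (((nxt ^^ n) \<circ> x) v)) \<or> (\<forall>v. \<not> bin (((nxt ^^ n) \<circ> x) v))"
    by blast+
  have e: "(nxt ^^ Suc n) \<circ> x = nxt \<circ> ((nxt ^^ n) \<circ> x)"
    by (simp only: funpow.simps comp_assoc)
  have "(global_map E rule13 ^^ Suc n) x = global_map E rule13 ((nxt ^^ n) \<circ> x)"
    using h by simp
  also have "\<dots> = nxt \<circ> ((nxt ^^ n) \<circ> x)" by (rule uniform_step(1)[OF u])
  finally show ?case unfolding e using uniform_step(2)[OF u] by blast
qed

definition bf :: "nat \<Rightarrow> st" where "bf n = (if even n then S0 else S1)"
definition af :: "nat \<Rightarrow> st" where
  "af n = (if n mod 3 = 0 then A0 else if n mod 3 = 1 then A1 else A2)"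

lemma af_Suc: "af (Suc n) = nxt (af n)"
proof -
  have "n mod 3 = 0 \<or> n mod 3 = 1 \<or> n mod 3 = 2" by presburger
  moreover have "n mod 3 = 0 \<Longrightarrow> Suc n mod 3 = 1" by presburger
  moreover have "n mod 3 = 1 \<Longrightarrow> Suc n mod 3 = 2" by presburger
  moreover have "n mod 3 = 2 \<Longrightarrow> Suc n mod 3 = 0" by presburger
  ultimately show ?thesis unfolding af_def by auto
qed

lemma bf_Suc: "bf (Suc n) = nxt (bf n)"
  unfolding bf_def by auto

lemma af_nbin: "\<not> bin (af n)" by (auto simp: af_def bin_def)

theorem mainTheorem13:
  fixes E :: "'v \<Rightarrow> 'v \<Rightarrow> bool"
  assumes "symp E"
  shows "graph_connected E \<longleftrightarrow>
         \<not> (\<exists>c :: 'v \<Rightarrow> st. has_min_period (global_map E rule13) 6 c)"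
proof
  assume conn: "graph_connected E"
  show "\<not> (\<exists>c :: 'v \<Rightarrow> st. has_min_period (global_map E rule13) 6 c)"
  proof
    assume "\<exists>c :: 'v \<Rightarrow> st. has_min_period (global_map E rule13) 6 c"
    then obtain c :: "'v \<Rightarrow> st" where per: "(global_map E rule13 ^^ 6) c = c"
      and minp: "\<forall>j. 1 \<le> j \<and> j < 6 \<longrightarrow> (global_map E rule13 ^^ j) c \<noteq> c"
      unfolding has_min_period_def by blast
    let ?F = "global_map E rule13"
    have unif: "(\<forall>v. bin (c v)) \<or> (\<forall>v. \<not> bin (c v))"
    proof (cases "\<exists>v. bin (c v)")
      case True
      then obtain v where v: "bin (c v)" by blast
      have stp: "bin (c u)" if "bin (c w)" "E w u" for w u
      proof -
        have "E u w" using assms that(2) by (meson sympD)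
        then have "bin (?F c u)" using bin_spread[of c w E u] that(1) by blast
        then have "bin ((?F ^^ 1) c u)" by simp
        then have "bin ((?F ^^ 5) ((?F ^^ 1) c) u)" by (rule bin_persist_n)
        moreover have "(?F ^^ 5) ((?F ^^ 1) c) = c"
        proof -
          have h1: "(?F ^^ (5+1)) c = (?F ^^ 5) ((?F ^^ 1) c)"
            by (simp only: funpow_add o_apply)
          have h2: "(5+1::nat) = 6" by simp
          show ?thesis using h1 h2 per by metis
        qed
        ultimately show ?thesis by metis
      qed
      have "bin (c u)" for u
      proof -
        have "E\<^sup>*\<^sup>* v u" using conn unfolding graph_connected_def by blast
        then show ?thesis
        proof (induction rule: rtranclp_induct)
          case base then show ?case using v .
        next
          case (step y z) then show ?case using stp by blast
        qed
      qed
      then show ?thesis by blast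
    qed auto
    from unif show False
    proof
      assume a: "\<forall>v. bin (c v)"
      have "(?F ^^ 2) c = (nxt ^^ 2) \<circ> c" using uniform_iter[OF unif, where E=E and n=2] by (rule conjunct1)
      also have "\<dots> = c"
      proof
        fix v have "bin (c v)" using a by blast
        then show "((nxt ^^ 2) \<circ> c) v = c v"
          by (cases "c v") (auto simp: bin_def numeral_2_eq_2)
      qed
      finally have eqk: "(?F ^^ 2) c = c" .
      have "1 \<le> (2::nat) \<and> (2::nat) < 6" by simp
      then have "(?F ^^ 2) c \<noteq> c" using minp by blast
      then show False using eqk by blast
    next
      assume a: "\<forall>v. \<not> bin (c v)"
      have "(?F ^^ 3) c = (nxt ^^ 3) \<circ> c" using uniform_iter[OF unif, where E=E and n=3] by (rule conjunct1)
      also have "\<dots> = c"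
      proof
        fix v have "\<not> bin (c v)" using a by blast
        then show "((nxt ^^ 3) \<circ> c) v = c v"
          by (cases "c v") (auto simp: bin_def numeral_3_eq_3)
      qed
      finally have eqk: "(?F ^^ 3) c = c" .
      have "1 \<le> (3::nat) \<and> (3::nat) < 6" by simp
      then have "(?F ^^ 3) c \<noteq> c" using minp by blast
      then show False using eqk by blast
    qed
  qed
next
  assume "\<not> (\<exists>c :: 'v \<Rightarrow> st. has_min_period (global_map E rule13) 6 c)"
  show "graph_connected E"
  proof (rule ccontr)
    assume "\<not> graph_connected E"
    then obtain u v where nuv: "\<not> E\<^sup>*\<^sup>* u v" unfolding graph_connected_def by blast
    let ?F = "global_map E rule13"
    define c where "c = (\<lambda>w. if E\<^sup>*\<^sup>* u w then S0 else A0)"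
    have closed: "E\<^sup>*\<^sup>* u w" if "E\<^sup>*\<^sup>* u w'" "E w w'" for w w'
      using that assms by (meson rtranclp.rtrancl_into_rtrancl sympD)
    have iter: "(?F ^^ n) c = (\<lambda>w. if E\<^sup>*\<^sup>* u w then bf n else af n)" for n
    proof (induction n)
      case 0 then show ?case by (auto simp: c_def bf_def af_def)
    next
      case (Suc n)
      show ?case
      proof
        fix w
        have "(?F ^^ Suc n) c w = ?F (\<lambda>w. if E\<^sup>*\<^sup>* u w then bf n else af n) w"
          using Suc by simp
        also have "\<dots> = (if E\<^sup>*\<^sup>* u w then bf (Suc n) else af (Suc n))"
        proof (cases "E\<^sup>*\<^sup>* u w")
          case True then show ?thesis
            by (cases "even n") (auto simp: global_map_def bf_def)
        next
          case False
          then have nb: "\<forall>w'. E w w' \<longrightarrow> \<not> E\<^sup>*\<^sup>* u w'" using closed by blast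
          have N: "{(if E\<^sup>*\<^sup>* u w' then bf n else af n) | w'. E w w'} \<subseteq> {af n}"
            using nb by auto
          have d: "S0 \<noteq> af n" "S1 \<noteq> af n" using af_nbin[of n] unfolding bin_def by auto
          let ?N = "{(if E\<^sup>*\<^sup>* u w' then bf n else af n) | w'. E w w'}"
          have n0: "S0 \<notin> ?N" using N d(1) by blast
          have n1: "S1 \<notin> ?N" using N d(2) by blast
          have g: "?F (\<lambda>w. if E\<^sup>*\<^sup>* u w then bf n else af n) w = rule13 (af n) ?N"
            using False by (simp add: global_map_def)
          have r: "rule13 (af n) ?N = nxt (af n)"
            using n0 n1 d by (cases "af n") simp_all
          show ?thesis using g r False af_Suc[of n] by simp
        qed
        finally show "(?F ^^ Suc n) c w = (if E\<^sup>*\<^sup>* u w then bf (Suc n) else af (Suc n))" .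
      qed
    qed
    have "has_min_period ?F 6 c"
      unfolding has_min_period_def
    proof (intro conjI allI impI)
      show "(?F ^^ 6) c = c" unfolding iter by (auto simp: c_def bf_def af_def)
    next
      fix j :: nat assume j: "1 \<le> j \<and> j < 6"
      show "(?F ^^ j) c \<noteq> c"
      proof
        assume eq: "(?F ^^ j) c = c"
        have eu: "bf j = S0" using fun_cong[OF eq, of u] unfolding iter by (simp add: c_def)
        have ev: "af j = A0" using fun_cong[OF eq, of v] nuv unfolding iter by (simp add: c_def)
        from j have "j = 1 \<or> j = 2 \<or> j = 3 \<or> j = 4 \<or> j = 5" by auto
        then show False using eu ev by (auto simp: bf_def af_def)
      qed
    qed
    then show False using \<open>\<not> (\<exists>c :: 'v \<Rightarrow> st. has_min_period (global_map E rule13) 6 c)\<close> by blast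
  qed
qed

end
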